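(* Let $N\ge 2$ and let $A_1,\dots,A_N$ be distinct Boolean variables. Then $$A_1\vee A_2\vee\dots\vee A_N=(A_1<(A_2<\cdots(A_N<1)\cdots))<1$$ as Boolean functions, and this right-hand side, which contains exactly two occurrences of the constant $1$ and exactly one occurrence of each variable $A_i$, is a minimal $(<,1)$-representation of $A_1\vee\dots\vee A_N$, i.e. no $(<,1)$-expression representing $A_1\vee\dots\vee A_N$ uses fewer occurrences of the operation $<$.
   Context: The binary Boolean operation $<$ (Strict Boolean Inequality) is defined by $A<B=(\neg A)\wedge B$, i.e. $A<B=1$ iff $A=0$ and $B=1$. A $(<,1)$-representation (or $(<,1)$-expression) of a Boolean function of variables $A_1,\dots,A_N$ is a formula built from the variables $A_1,\dots,A_N$ and the constant $1$ using only the binary operation $<$, which computes that function; its cost is the number of occurrences of $<$ (number of gates), and a representation is minimal if no representation of the same function has smaller cost. *)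

theory Defs
  imports Main
begin

definition slt :: "bool \<Rightarrow> bool \<Rightarrow> bool" where
  "slt a b \<longleftrightarrow> \<not> a \<and> b"

datatype expr = One | Var nat | Lt expr expr

primrec eval :: "(nat \<Rightarrow> bool) \<Rightarrow> expr \<Rightarrow> bool" where
  "eval v One = True"
| "eval v (Var i) = v i"
| "eval v (Lt e1 e2) = slt (eval v e1) (eval v e2)"

primrec cost :: "expr \<Rightarrow> nat" where
  "cost One = 0"
| "cost (Var i) = 0"
| "cost (Lt e1 e2) = Suc (cost e1 + cost e2)"

primrec vars :: "expr \<Rightarrow> nat set" where
  "vars One = {}"
| "vars (Var i) = {i}"
| "vars (Lt e1 e2) = vars e1 \<union> vars e2"

primrec ones :: "expr \<Rightarrow> nat" where
  "ones One = 1"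
| "ones (Var i) = 0"
| "ones (Lt e1 e2) = ones e1 + ones e2"

primrec var_count :: "nat \<Rightarrow> expr \<Rightarrow> nat" where
  "var_count j One = 0"
| "var_count j (Var i) = (if i = j then 1 else 0)"
| "var_count j (Lt e1 e2) = var_count j e1 + var_count j e2"

definition is_expr_over :: "nat \<Rightarrow> expr \<Rightarrow> bool" where
  "is_expr_over N e \<longleftrightarrow> vars e \<subseteq> {1..N}"

primrec chain :: "nat \<Rightarrow> nat \<Rightarrow> expr" where
  "chain i 0 = One"
| "chain i (Suc k) = Lt (Var i) (chain (Suc i) k)"

definition or_rep :: "nat \<Rightarrow> expr" where
  "or_rep N = Lt (chain 1 N) One"

end

theory Submission
  imports Defs
begin

lemma chain_eval: "eval v (chain i k) = (\<forall>j\<in>{i..<i+k}. \<not> v j)"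
proof (induction k arbitrary: i)
  case 0 then show ?case by simp
next
  case (Suc k)
  have "{i..<i+Suc k} = insert i {Suc i..<Suc i+k}" by auto
  then show ?case using Suc by (simp add: slt_def)
qed

lemma chain_vars: "vars (chain i k) = {i..<i+k}"
  by (induction k arbitrary: i) auto

lemma chain_ones: "ones (chain i k) = 1"
  by (induction k arbitrary: i) auto

lemma chain_cost: "cost (chain i k) = k"
  by (induction k arbitrary: i) auto

lemma chain_vc: "var_count j (chain i k) = (if j \<in> {i..<i+k} then 1 else 0)"
  by (induction k arbitrary: i) auto

lemma eval_cong: "(\<And>j. j \<in> vars e \<Longrightarrow> v j = w j) \<Longrightarrow> eval v e = eval w e"
  by (induction e) auto

lemma noones_false: "ones e = 0 \<Longrightarrow> \<not> eval (\<lambda>_. False) e"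
  by (induction e) (auto simp: slt_def)

lemma finite_vars: "finite (vars e)"
  by (induction e) auto

lemma leaves: "card (vars e) + ones e \<le> cost e + 1"
proof (induction e)
  case (Lt e1 e2)
  have "card (vars e1 \<union> vars e2) \<le> card (vars e1) + card (vars e2)"
    by (rule card_Un_le)
  then show ?case using Lt by simp
qed auto

lemma lower:
  assumes N: "N \<ge> 2"
  shows "vars e \<subseteq> {1..N} \<Longrightarrow> (\<forall>v. eval v e = (\<exists>i\<in>{1..N}. v i)) \<Longrightarrow> N + 1 \<le> cost e"
proof (induction e)
  case One
  then have "\<exists>i\<in>{1..N}. (\<lambda>_. False) i" using One(2)[rule_format, of "\<lambda>_. False"] by simp
  then show ?case by simp
next
  case (Var i)
  have "i \<in> {1..N}" using Var by simp
  obtain k where k: "k \<in> {1..N}" "k \<noteq> i"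
  proof (cases "i = 1")
    case True then show ?thesis using that[of 2] N by auto
  next
    case False then show ?thesis using that[of 1] N by auto
  qed
  have "eval (\<lambda>j. j = k) (Var i) = (\<exists>j\<in>{1..N}. j = k)" using Var(2) by blast
  then show ?case using k by auto
next
  case (Lt a b)
  show ?case
  proof (cases "\<forall>v. \<not> eval v a")
    case True
    then have "\<forall>v. eval v b = (\<exists>i\<in>{1..N}. v i)" using Lt.prems(2) by (simp add: slt_def)
    then have "N + 1 \<le> cost b" using Lt by simp
    then show ?thesis by simp
  next
    case False
    then obtain v where va: "eval v a" by blast
    have va_vars: "vars a \<subseteq> {1..N}" using Lt.prems(1) by simp
    have allf: "\<forall>i\<in>{1..N}. \<not> v i" using va Lt.prems(2)[rule_format, of v] by (auto simp: slt_def)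
    have a0: "eval (\<lambda>_. False) a"
      using va eval_cong[of a v "\<lambda>_. False"] va_vars allf by auto
    then have o: "ones a \<ge> 1" using noones_false[of a] by (cases "ones a") auto
    have sub: "{1..N} \<subseteq> vars a"
    proof
      fix i assume i: "i \<in> {1..N}"
      show "i \<in> vars a"
      proof (rule ccontr)
        assume "i \<notin> vars a"
        then have "eval (\<lambda>j. j = i) a = eval (\<lambda>_. False) a"
          by (intro eval_cong) auto
        with a0 have "eval (\<lambda>j. j = i) a" by simp
        moreover have "eval (\<lambda>j. j = i) (Lt a b)" using Lt.prems(2) i by blast
        ultimately show False by (simp add: slt_def)
      qed
    qed
    have "N \<le> card (vars a)" using card_mono[OF finite_vars sub] by simp
    then have "N \<le> cost a" using leaves[of a] o by simp
    then show ?thesis by simp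
  qed
qed

theorem mainTheorem3:
  fixes N :: nat
  assumes "N \<ge> 2"
  shows "(\<forall>v. eval v (or_rep N) = (\<exists>i\<in>{1..N}. v i))
       \<and> is_expr_over N (or_rep N)
       \<and> ones (or_rep N) = 2
       \<and> (\<forall>i\<in>{1..N}. var_count i (or_rep N) = 1)
       \<and> (\<forall>e. is_expr_over N e \<and> (\<forall>v. eval v e = (\<exists>i\<in>{1..N}. v i))
              \<longrightarrow> cost (or_rep N) \<le> cost e)"
proof (intro conjI allI impI)
  fix v show "eval v (or_rep N) = (\<exists>i\<in>{1..N}. v i)"
    by (auto simp: or_rep_def slt_def chain_eval)
next
  show "is_expr_over N (or_rep N)" by (auto simp: is_expr_over_def or_rep_def chain_vars)
next
  show "ones (or_rep N) = 2" by (simp add: or_rep_def chain_ones)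
next
  show "\<forall>i\<in>{1..N}. var_count i (or_rep N) = 1" by (auto simp: or_rep_def chain_vc)
next
  fix e assume "is_expr_over N e \<and> (\<forall>v. eval v e = (\<exists>i\<in>{1..N}. v i))"
  then have "N + 1 \<le> cost e" using lower[OF assms] by (auto simp: is_expr_over_def)
  then show "cost (or_rep N) \<le> cost e" by (simp add: or_rep_def chain_cost)
qed

end
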